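(* Let $V$ be an $n$-dimensional vector space over a field $\mathbb{F}$ with an alternating bilinear form $\mathsf{s}$ of maximal rank. Then the pre-geometry $\Gamma(V)$ is transversal and has a string diagram (with respect to the natural ordering of the type set $I=\{1,\dots,n-1\}$).
   Context: $\mathrm{Rad}(U)=U\cap U^\perp$ with respect to $\mathsf{s}$; maximal rank means $\dim\mathrm{Rad}(V)\le1$. $\Gamma(V)$: for $i\in I$ the objects of type $i$ are the $i$-dimensional subspaces $U$ with $U\cap\mathrm{Rad}(V)=0$ and $\dim\mathrm{Rad}(U)\le1$; $X,Y$ are incident iff $X=Y$, or $X\subseteq Y$ with $X\cap\mathrm{Rad}(Y)=0$, or vice versa. A flag is a set of pairwise incident objects, a chamber is a flag containing an object of every type. Transversal: every flag is contained in a chamber. Has a string diagram (w.r.t. a total order on $I$): whenever $i<j<k$ and $X,Y,Z$ are objects of types $i,j,k$ with $X$ and $Z$ both incident to $Y$, then $X$ is incident to $Z$. *)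

theory Defs
  imports Complex_Main
begin

definition alt_bilinear :: "('a::field \<Rightarrow> 'v::ab_group_add \<Rightarrow> 'v) \<Rightarrow> ('v \<Rightarrow> 'v \<Rightarrow> 'a) \<Rightarrow> bool" where
  "alt_bilinear scale s \<longleftrightarrow>
     (\<forall>u v w. s (u + v) w = s u w + s v w) \<and>
     (\<forall>c u w. s (scale c u) w = c * s u w) \<and>
     (\<forall>u v w. s u (v + w) = s u v + s u w) \<and>
     (\<forall>c u w. s u (scale c w) = c * s u w) \<and>
     (\<forall>v. s v v = 0)"

definition Rad :: "('v \<Rightarrow> 'v \<Rightarrow> 'a::zero) \<Rightarrow> 'v set \<Rightarrow> 'v set" where
  "Rad s U = U \<inter> {v. \<forall>u\<in>U. s u v = 0}"

definition types :: "('a::field \<Rightarrow> 'v::ab_group_add \<Rightarrow> 'v) \<Rightarrow> nat set" where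
  "types scale = {1 .. Vector_Spaces.vector_space.dim scale (UNIV::'v set) - 1}"

definition gobj :: "('a::field \<Rightarrow> 'v::ab_group_add \<Rightarrow> 'v) \<Rightarrow> ('v \<Rightarrow> 'v \<Rightarrow> 'a) \<Rightarrow> 'v set \<Rightarrow> bool" where
  "gobj scale s U \<longleftrightarrow> Modules.module.subspace scale U \<and>
     Vector_Spaces.vector_space.dim scale U \<in> types scale \<and>
     U \<inter> Rad s UNIV = {0} \<and>
     Vector_Spaces.vector_space.dim scale (Rad s U) \<le> 1"

definition gtype :: "('a::field \<Rightarrow> 'v::ab_group_add \<Rightarrow> 'v) \<Rightarrow> 'v set \<Rightarrow> nat" where
  "gtype scale U = Vector_Spaces.vector_space.dim scale U"

definition incident :: "('v::zero \<Rightarrow> 'v \<Rightarrow> 'a::zero) \<Rightarrow> 'v set \<Rightarrow> 'v set \<Rightarrow> bool" where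
  "incident s X Y \<longleftrightarrow> X = Y \<or> (X \<subseteq> Y \<and> X \<inter> Rad s Y = {0}) \<or> (Y \<subseteq> X \<and> Y \<inter> Rad s X = {0})"

definition is_flag :: "('a::field \<Rightarrow> 'v::ab_group_add \<Rightarrow> 'v) \<Rightarrow> ('v \<Rightarrow> 'v \<Rightarrow> 'a) \<Rightarrow> 'v set set \<Rightarrow> bool" where
  "is_flag scale s F \<longleftrightarrow> (\<forall>X\<in>F. gobj scale s X) \<and> (\<forall>X\<in>F. \<forall>Y\<in>F. incident s X Y)"

definition is_chamber :: "('a::field \<Rightarrow> 'v::ab_group_add \<Rightarrow> 'v) \<Rightarrow> ('v \<Rightarrow> 'v \<Rightarrow> 'a) \<Rightarrow> 'v set set \<Rightarrow> bool" where
  "is_chamber scale s C \<longleftrightarrow> is_flag scale s C \<and> (\<forall>i\<in>types scale. \<exists>X\<in>C. gtype scale X = i)"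

definition transversal :: "('a::field \<Rightarrow> 'v::ab_group_add \<Rightarrow> 'v) \<Rightarrow> ('v \<Rightarrow> 'v \<Rightarrow> 'a) \<Rightarrow> bool" where
  "transversal scale s \<longleftrightarrow> (\<forall>F. is_flag scale s F \<longrightarrow> (\<exists>C. is_chamber scale s C \<and> F \<subseteq> C))"

definition string_diagram :: "('a::field \<Rightarrow> 'v::ab_group_add \<Rightarrow> 'v) \<Rightarrow> ('v \<Rightarrow> 'v \<Rightarrow> 'a) \<Rightarrow> bool" where
  "string_diagram scale s \<longleftrightarrow>
     (\<forall>X Y Z. gobj scale s X \<and> gobj scale s Y \<and> gobj scale s Z \<and>
        gtype scale X < gtype scale Y \<and> gtype scale Y < gtype scale Z \<and>
        incident s X Y \<and> incident s Z Y \<longrightarrow> incident s X Z)"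

end

theory Submission
  imports Defs
begin

lemma incident_sym: "incident s X Y = incident s Y X"
  unfolding incident_def by blast

context finite_dimensional_vector_space
begin

lemma ab_zero2:
  assumes "alt_bilinear scale s"
  shows "s u 0 = 0"
proof -
  have "s u (0 *s 0) = 0 * s u 0" using assms unfolding alt_bilinear_def by blast
  then show ?thesis by simp
qed

lemma rad_subspace:
  assumes ab: "alt_bilinear scale s" and U: "subspace U"
  shows "subspace (Rad s U)"
proof -
  have "subspace {v. \<forall>u\<in>U. s u v = 0}"
    unfolding subspace_def using ab ab_zero2[OF ab] unfolding alt_bilinear_def by auto
  then show ?thesis unfolding Rad_def using U subspace_inter by blast
qed

lemma step:
  assumes ab: "alt_bilinear scale s" and sA: "subspace A" and sB: "subspace B"
    and AB: "A \<subseteq> B" and AR: "A \<inter> Rad s B = {0}"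
    and dA: "dim (Rad s A) \<le> 1" and dB: "dim (Rad s B) \<le> 1"
    and dAB: "dim A + 1 < dim B"
  shows "\<exists>C. subspace C \<and> A \<subseteq> C \<and> C \<subseteq> B \<and> dim C = dim A + 1 \<and>
     A \<inter> Rad s C = {0} \<and> C \<inter> Rad s B = {0} \<and> dim (Rad s C) \<le> 1"
proof -
  define R where "R = Rad s B"
  have sR: "subspace R" unfolding R_def by (rule rad_subspace[OF ab sB])
  have RB: "R \<subseteq> B" unfolding R_def Rad_def by blast
  define W where "W = span (A \<union> R)"
  have sW: "subspace W" unfolding W_def by simp
  have WB: "W \<subseteq> B" unfolding W_def using AB RB sB span_minimal by blast
  have AW: "A \<subseteq> W" "R \<subseteq> W" unfolding W_def by (auto intro: span_base)
  have Weq: "W = {x + y |x y. x \<in> A \<and> y \<in> R}"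
  proof -
    have e: "span A = A" "span R = R" using sA sR span_eq_iff by blast+
    show ?thesis unfolding W_def span_Un e ..
  qed
  have "dim W \<le> dim A + dim R"
    using dim_sums_Int[OF sA sR] Weq by simp
  then have "dim W < dim B" using dB dAB unfolding R_def by simp
  then obtain w where w: "w \<in> B" "w \<notin> W" using WB by (metis dim_subset subsetI not_le)
  have "\<exists>v. v \<in> B \<and> v \<notin> W \<and> (\<forall>x\<in>Rad s A. x \<noteq> 0 \<longrightarrow> s v x \<noteq> 0)"
  proof (cases "\<exists>r\<in>Rad s A. r \<noteq> 0")
    case False
    then show ?thesis using w by blast
  next
    case True
    then obtain r where r: "r \<in> Rad s A" "r \<noteq> 0" by blast
    have sRA: "subspace (Rad s A)" by (rule rad_subspace[OF ab sA])
    have "span {r} \<subseteq> Rad s A" using r sRA span_minimal by blast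
    moreover have "dim (span {r}) = 1" using r by simp
    ultimately have eq: "span {r} = Rad s A"
      using subspace_dim_equal[of "span {r}" "Rad s A"] sRA dA by simp
    have rA: "r \<in> A" using r unfolding Rad_def by blast
    have "r \<notin> R" using rA AR r unfolding R_def by blast
    then obtain h where h: "h \<in> B" "s h r \<noteq> 0"
      using rA AB unfolding R_def Rad_def by blast
    have key: "\<forall>x\<in>Rad s A. x \<noteq> 0 \<longrightarrow> s v x \<noteq> 0" if "s v r \<noteq> 0" for v
    proof (intro ballI impI)
      fix x assume "x \<in> Rad s A" "x \<noteq> 0"
      then obtain k where k: "x = k *s r" using eq span_singleton by blast
      then have "k \<noteq> 0" using \<open>x \<noteq> 0\<close> by auto
      have "s v x = k * s v r" using k ab unfolding alt_bilinear_def by blast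
      then show "s v x \<noteq> 0" using \<open>k \<noteq> 0\<close> that by simp
    qed
    show ?thesis
    proof (cases "s w r \<noteq> 0")
      case True then show ?thesis using key w by blast
    next
      case wr: False
      show ?thesis
      proof (cases "h \<in> W")
        case False then show ?thesis using key h by blast
      next
        case hW: True
        have "w + h \<in> B" using w h sB subspace_add by blast
        moreover have "w + h \<notin> W"
        proof
          assume "w + h \<in> W"
          then have "(w + h) - h \<in> W" using hW sW subspace_diff by blast
          then show False using w by simp
        qed
        moreover have "s (w + h) r \<noteq> 0"
          using ab wr h unfolding alt_bilinear_def by simp
        ultimately show ?thesis using key by blast
      qed
    qed
  qed
  then obtain v where v: "v \<in> B" "v \<notin> W" "\<forall>x\<in>Rad s A. x \<noteq> 0 \<longrightarrow> s v x \<noteq> 0" by blast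
  define C where "C = span (insert v A)"
  have sC: "subspace C" unfolding C_def by simp
  have AC: "A \<subseteq> C" unfolding C_def using span_superset by blast
  have vC: "v \<in> C" unfolding C_def using span_superset by blast
  have CB: "C \<subseteq> B" unfolding C_def using v AB sB span_minimal by blast
  have spA: "span A = A" using sA by simp
  have vA: "v \<notin> A" using v AW by blast
  have dC: "dim C = dim A + 1" unfolding C_def dim_span dim_insert spA using vA by simp
  have CR: "C \<inter> R = {0}"
  proof
    show "C \<inter> R \<subseteq> {0}"
    proof
      fix x assume x: "x \<in> C \<inter> R"
      then obtain k where k: "x - k *s v \<in> A" unfolding C_def span_insert spA by blast
      show "x \<in> {0}"
      proof (cases "k = 0")
        case True
        then have "x \<in> A" using k by simp
        then show ?thesis using x AR unfolding R_def by blast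
      next
        case False
        have "x - (x - k *s v) \<in> W" using x k AW sW subspace_diff by blast
        then have "k *s v \<in> W" by simp
        then have "inverse k *s (k *s v) \<in> W" using sW subspace_scale by blast
        then have "v \<in> W" using False by simp
        then show ?thesis using v by blast
      qed
    qed
    show "{0} \<subseteq> C \<inter> R" using sC sR subspace_0 by blast
  qed
  have sRC: "subspace (Rad s C)" by (rule rad_subspace[OF ab sC])
  have ARC: "A \<inter> Rad s C = {0}"
  proof
    show "A \<inter> Rad s C \<subseteq> {0}"
    proof
      fix x assume x: "x \<in> A \<inter> Rad s C"
      then have "x \<in> Rad s A" using AC unfolding Rad_def by blast
      moreover have "s v x = 0" using x vC unfolding Rad_def by blast
      ultimately show "x \<in> {0}" using v by blast
    qed
    show "{0} \<subseteq> A \<inter> Rad s C" using sA sRC subspace_0 by blast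
  qed
  have "dim {x + y |x y. x \<in> A \<and> y \<in> Rad s C} \<le> dim C"
    apply (rule dim_subset)
    using AC sC subspace_add unfolding Rad_def by blast
  then have "dim (Rad s C) \<le> 1"
    using dim_sums_Int[OF sA sRC] ARC dC by simp
  then show ?thesis using sC AC CB dC ARC CR unfolding R_def by blast
qed

lemma iter:
  assumes ab: "alt_bilinear scale s" and sA: "subspace A" and sB: "subspace B"
    and AB: "A \<subseteq> B" and AR: "A \<inter> Rad s B = {0}"
    and dA: "dim (Rad s A) \<le> 1" and dB: "dim (Rad s B) \<le> 1"
  shows "0 < k \<Longrightarrow> dim A + k < dim B \<Longrightarrow> \<exists>C. subspace C \<and> A \<subseteq> C \<and> C \<subseteq> B \<and> dim C = dim A + k \<and>
     A \<inter> Rad s C = {0} \<and> C \<inter> Rad s B = {0} \<and> dim (Rad s C) \<le> 1"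
proof (induction k)
  case 0
  then show ?case by simp
next
  case (Suc k)
  show ?case
  proof (cases "k = 0")
    case True
    then show ?thesis using step[OF ab sA sB AB AR dA dB] Suc by simp
  next
    case False
    then obtain C where C: "subspace C" "A \<subseteq> C" "C \<subseteq> B" "dim C = dim A + k"
      "A \<inter> Rad s C = {0}" "C \<inter> Rad s B = {0}" "dim (Rad s C) \<le> 1"
      using Suc by auto
    have "dim C + 1 < dim B" using C(4) Suc by simp
    then obtain C' where C': "subspace C'" "C \<subseteq> C'" "C' \<subseteq> B" "dim C' = dim C + 1"
      "C \<inter> Rad s C' = {0}" "C' \<inter> Rad s B = {0}" "dim (Rad s C') \<le> 1"
      using step[OF ab C(1) sB C(3) C(6) C(7) dB] by blast
    have "A \<inter> Rad s C' = {0}"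
    proof
      show "A \<inter> Rad s C' \<subseteq> {0}" using C(2) C'(5) by blast
      show "{0} \<subseteq> A \<inter> Rad s C'" using sA rad_subspace[OF ab C'(1)] subspace_0 by blast
    qed
    moreover have "A \<subseteq> C'" using C(2) C'(2) by blast
    ultimately show ?thesis using C C' by (intro exI[of _ C']) simp
  qed
qed

lemma extend:
  assumes ab: "alt_bilinear scale s" and dV: "dim (Rad s UNIV) \<le> 1"
    and F: "is_flag scale s F" and i: "i \<in> types scale" and ni: "i \<notin> gtype scale ` F"
  shows "\<exists>C. gobj scale s C \<and> gtype scale C = i \<and> (\<forall>X\<in>F. incident s X C)"
proof -
  have Fo: "\<And>X. X \<in> F \<Longrightarrow> gobj scale s X" and Fi: "\<And>X Y. X \<in> F \<Longrightarrow> Y \<in> F \<Longrightarrow> incident s X Y"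
    using F unfolding is_flag_def by auto
  have Fs: "\<And>X. X \<in> F \<Longrightarrow> subspace X" using Fo unfolding gobj_def by blast
  have Fr: "\<And>X. X \<in> F \<Longrightarrow> dim (Rad s X) \<le> 1" using Fo unfolding gobj_def by blast
  have FV: "\<And>X. X \<in> F \<Longrightarrow> X \<inter> Rad s UNIV = {0}" using Fo unfolding gobj_def by blast
  have i1: "1 \<le> i" "i < dim UNIV" using i unfolding types_def by auto
  have gt: "\<And>X. gtype scale X = dim X" unfolding gtype_def by simp
  have dimne: "\<And>X. X \<in> F \<Longrightarrow> dim X \<noteq> i" using ni gt by force
  define L where "L = {X\<in>F. dim X < i}"
  define U where "U = {X\<in>F. i < dim X}"
  obtain A where sA: "subspace A" and dA: "dim A < i" and rA: "dim (Rad s A) \<le> 1"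
    and LA: "\<forall>X\<in>L. X \<subseteq> A" and AF: "A = {0} \<or> A \<in> F"
  proof (cases "L = {}")
    case True
    have "subspace {0}" unfolding subspace_def by simp
    moreover have "dim (Rad s {0}) \<le> 1"
    proof -
      have "Rad s {0} = {0}" unfolding Rad_def using ab_zero2[OF ab] by auto
      then show ?thesis by simp
    qed
    ultimately show ?thesis using that[of "{0}"] True i1 by simp
  next
    case False
    have fin: "finite (dim ` L)" by (rule finite_subset[of _ "{..<i}"]) (auto simp: L_def)
    define d where "d = Max (dim ` L)"
    have "d \<in> dim ` L" unfolding d_def using fin False by simp
    then obtain A where A: "A \<in> L" "dim A = d" by blast
    have le: "\<And>X. X \<in> L \<Longrightarrow> dim X \<le> dim A" using A fin unfolding d_def by simp
    have LAx: "\<forall>X\<in>L. X \<subseteq> A"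
    proof
    fix X assume X: "X \<in> L"
    show "X \<subseteq> A"
    proof -
      have "incident s X A" using X A Fi unfolding L_def by blast
      then have "X = A \<or> X \<subseteq> A \<or> A \<subseteq> X" unfolding incident_def by blast
      moreover have "A \<subseteq> X \<Longrightarrow> A = X"
        using subspace_dim_equal[of A X] Fs X A le unfolding L_def by blast
      ultimately show ?thesis by blast
    qed
    qed
    have AF: "A \<in> F" "dim A < i" using A unfolding L_def by auto
    show ?thesis
      by (rule that[of A, OF Fs[OF AF(1)] AF(2) Fr[OF AF(1)] LAx]) (use AF(1) in blast)
  qed
  obtain B where sB: "subspace B" and dB: "i < dim B" and rB: "dim (Rad s B) \<le> 1"
    and UB: "\<forall>X\<in>U. B \<subseteq> X \<and> (B = X \<or> B \<inter> Rad s X = {0})" and BF: "B = UNIV \<or> B \<in> F"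
  proof (cases "U = {}")
    case True
    then show ?thesis using that[of UNIV] i1 dV by simp
  next
    case False
    have fin: "finite (dim ` U)" by (rule finite_subset[of _ "{..dim (UNIV::'b set)}"])
      (auto simp: U_def dim_subset_UNIV[unfolded dimension_def])
    define d where "d = Min (dim ` U)"
    have "d \<in> dim ` U" unfolding d_def using fin False by simp
    then obtain B where B: "B \<in> U" "dim B = d" by blast
    have le: "\<And>X. X \<in> U \<Longrightarrow> dim B \<le> dim X" using B fin unfolding d_def by simp
    have UBx: "\<forall>X\<in>U. B \<subseteq> X \<and> (B = X \<or> B \<inter> Rad s X = {0})"
    proof
    fix X assume X: "X \<in> U"
    show "B \<subseteq> X \<and> (B = X \<or> B \<inter> Rad s X = {0})"
    proof -
      have "incident s B X" using X B Fi unfolding U_def by blast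
      then have "B = X \<or> (B \<subseteq> X \<and> B \<inter> Rad s X = {0}) \<or> X \<subseteq> B" unfolding incident_def by blast
      moreover have "X \<subseteq> B \<Longrightarrow> X = B"
        using subspace_dim_equal[of X B] Fs X B le unfolding U_def by blast
      ultimately show ?thesis by blast
    qed
    qed
    have BF: "B \<in> F" "i < dim B" using B unfolding U_def by auto
    show ?thesis
      by (rule that[of B, OF Fs[OF BF(1)] BF(2) Fr[OF BF(1)] UBx]) (use BF(1) in blast)
  qed
  have sRB: "subspace (Rad s B)" by (rule rad_subspace[OF ab sB])
  have AB: "A \<subseteq> B \<and> A \<inter> Rad s B = {0}"
  proof (cases "A = {0}")
    case True
    then show ?thesis using sB sRB subspace_0 by blast
  next
    case False
    then have AF': "A \<in> F" using AF by blast
    show ?thesis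
    proof (cases "B = UNIV")
      case True
      then show ?thesis using FV[OF AF'] by simp
    next
      case False
      then have BF': "B \<in> F" using BF by blast
      have "incident s A B" using Fi AF' BF' by blast
      moreover have "A \<noteq> B" using dA dB by auto
      moreover have "\<not> B \<subseteq> A" using dim_subset[of B A] dA dB by auto
      ultimately show ?thesis unfolding incident_def by blast
    qed
  qed
  obtain C where C: "subspace C" "A \<subseteq> C" "C \<subseteq> B" "dim C = dim A + (i - dim A)"
      "A \<inter> Rad s C = {0}" "C \<inter> Rad s B = {0}" "dim (Rad s C) \<le> 1"
    using iter[OF ab sA sB _ _ rA rB, of "i - dim A"] AB dA dB by auto
  have dC: "dim C = i" using C(4) dA by simp
  have sRC: "subspace (Rad s C)" by (rule rad_subspace[OF ab C(1)])
  have CV: "C \<inter> Rad s UNIV = {0}"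
  proof (cases "B = UNIV")
    case True
    then show ?thesis using C(6) by simp
  next
    case False
    then have "B \<in> F" using BF by blast
    then have "B \<inter> Rad s UNIV = {0}" using FV by blast
    moreover have "0 \<in> C" using C(1) subspace_0 by blast
    ultimately show ?thesis using C(3) by blast
  qed
  have gC: "gobj scale s C" unfolding gobj_def using C(1) C(7) dC i CV by simp
  have "incident s X C" if X: "X \<in> F" for X
  proof (cases "dim X < i")
    case True
    then have "X \<subseteq> A" using LA X unfolding L_def by blast
    moreover have "0 \<in> X" using Fs[OF X] subspace_0 by blast
    moreover have "0 \<in> Rad s C" using sRC subspace_0 by blast
    ultimately have "X \<subseteq> C \<and> X \<inter> Rad s C = {0}" using C(2) C(5) by blast
    then show ?thesis unfolding incident_def by blast
  next
    case False
    then have "i < dim X" using dimne[OF X] by simp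
    then have XU: "X \<in> U" using X unfolding U_def by blast
    then have BX: "B \<subseteq> X" "B = X \<or> B \<inter> Rad s X = {0}" using UB by auto
    have "0 \<in> C" using C(1) subspace_0 by blast
    moreover have "0 \<in> Rad s X" using rad_subspace[OF ab Fs[OF X]] subspace_0 by blast
    ultimately have "C \<subseteq> X \<and> C \<inter> Rad s X = {0}" using BX C(3) C(6) by blast
    then show ?thesis unfolding incident_def by blast
  qed
  then show ?thesis using gC dC gt by blast
qed

lemma transversal_aux:
  assumes ab: "alt_bilinear scale s" and dV: "dim (Rad s UNIV) \<le> 1"
  shows "is_flag scale s F \<Longrightarrow> \<exists>C. is_chamber scale s C \<and> F \<subseteq> C"
proof (induction "card (types scale - gtype scale ` F)" arbitrary: F rule: less_induct)
  case less
  show ?case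
  proof (cases "types scale - gtype scale ` F = {}")
    case True
    then have "is_chamber scale s F" using less.prems unfolding is_chamber_def by blast
    then show ?thesis by blast
  next
    case False
    then obtain i where i: "i \<in> types scale" "i \<notin> gtype scale ` F" by blast
    obtain C where C: "gobj scale s C" "gtype scale C = i" "\<forall>X\<in>F. incident s X C"
      using extend[OF ab dV less.prems i] by blast
    have fl: "is_flag scale s (insert C F)"
      using less.prems C unfolding is_flag_def incident_def by blast
    have fin: "finite (types scale)" unfolding types_def by simp
    have eq: "types scale - gtype scale ` insert C F = (types scale - gtype scale ` F) - {i}"
      using C(2) by auto
    have "card (types scale - gtype scale ` insert C F) < card (types scale - gtype scale ` F)"
      unfolding eq using i fin by (intro card_Diff1_less) auto
    then obtain Ch where "is_chamber scale s Ch" "insert C F \<subseteq> Ch" using less.hyps fl by blast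
    then show ?thesis by blast
  qed
qed

lemma string_aux:
  assumes ab: "alt_bilinear scale s"
  shows "string_diagram scale s"
  unfolding string_diagram_def
proof (intro allI impI)
  fix X Y Z
  assume h: "gobj scale s X \<and> gobj scale s Y \<and> gobj scale s Z \<and>
        gtype scale X < gtype scale Y \<and> gtype scale Y < gtype scale Z \<and>
        incident s X Y \<and> incident s Z Y"
  have sX: "subspace X" and sY: "subspace Y" and sZ: "subspace Z"
    using h unfolding gobj_def by auto
  have d: "dim X < dim Y" "dim Y < dim Z" using h unfolding gtype_def by auto
  have "\<not> Y \<subseteq> X" using dim_subset[of Y X] d by auto
  then have XY: "X \<subseteq> Y \<and> X \<inter> Rad s Y = {0}"
    using h d unfolding incident_def by auto
  have "\<not> Z \<subseteq> Y" using dim_subset[of Z Y] d by auto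
  then have YZ: "Y \<subseteq> Z \<and> Y \<inter> Rad s Z = {0}"
    using h d unfolding incident_def by auto
  have "0 \<in> X" using sX subspace_0 by blast
  moreover have "0 \<in> Rad s Z" using rad_subspace[OF ab sZ] subspace_0 by blast
  ultimately have "X \<subseteq> Z \<and> X \<inter> Rad s Z = {0}" using XY YZ by blast
  then show "incident s X Z" unfolding incident_def by blast
qed

end

theorem lemma3p2:
  fixes scale :: "'a::field \<Rightarrow> 'v::ab_group_add \<Rightarrow> 'v"
    and Basis :: "'v set"
    and s :: "'v \<Rightarrow> 'v \<Rightarrow> 'a"
    and n :: nat
  assumes "finite_dimensional_vector_space scale Basis"
    and "Vector_Spaces.vector_space.dim scale (UNIV :: 'v set) = n"
    and "alt_bilinear scale s"
    and "Vector_Spaces.vector_space.dim scale (Rad s UNIV) \<le> 1"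
  shows "transversal scale s \<and> string_diagram scale s"
proof -
  interpret V: finite_dimensional_vector_space scale Basis by (rule assms(1))
  show ?thesis
    unfolding transversal_def
    using V.transversal_aux[OF assms(3) assms(4)] V.string_aux[OF assms(3)] by blast
qed

end
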